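(* For every graph $G$ on $[n]$ (with $n\ge3$), the scattering matroid $\mathcal S(G)$ has rank at most $2n-3$. For the complete graph $K_n$ this bound is attained: $\mathrm{rank}\,\mathcal S(K_n)=2n-3$.
   Context: $G\subseteq\binom{[n]}{2}$ is a simple graph. The scattering matrix $S_G$ is the $2n\times|G|$ matrix over the field $\mathbb C(x_1,\dots,x_n)$ whose columns are indexed by the edges $ij\in G$ (with $i<j$). In column $ij$: - the entry in row $k\in[n]$ is $1$ if $k\in\{i,j\}$ and $0$ otherwise; - the entry in row $n+i$ is $1/(x_i-x_j)$; - the entry in row $n+j$ is $1/(x_j-x_i)$; - all other entries are $0$. The scattering matroid $\mathcal S(G)$ is the column matroid of $S_G$ over $\mathbb C(x_1,\dots,x_n)$. Its rank is the rank of $S_G$. *)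

theory Defs
  imports "HOL-Library.Poly_Mapping" "HOL-Library.Product_Lexorder" "HOL-Computational_Algebra.Fraction_Field"
          "Jordan_Normal_Form.DL_Rank"
begin

type_synonym mpoly = "(nat \<Rightarrow>\<^sub>0 nat) \<Rightarrow>\<^sub>0 complex"

type_synonym ratfun = "mpoly fract"

definition var :: "nat \<Rightarrow> ratfun" where
  "var i = Fract (Poly_Mapping.single (Poly_Mapping.single i 1) 1) 1"

definition graph_on :: "nat \<Rightarrow> (nat \<times> nat) set \<Rightarrow> bool" where
  "graph_on n G \<longleftrightarrow> G \<subseteq> {(i,j). 1 \<le> i \<and> i < j \<and> j \<le> n}"

definition complete_graph :: "nat \<Rightarrow> (nat \<times> nat) set" where
  "complete_graph n = {(i,j). 1 \<le> i \<and> i < j \<and> j \<le> n}"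

text \<open>Entry of column ij in row r (rows 1..2n; here 0-based row index r, row r+1).\<close>
definition scat_entry :: "nat \<Rightarrow> nat \<times> nat \<Rightarrow> nat \<Rightarrow> ratfun" where
  "scat_entry n e r = (case e of (i,j) \<Rightarrow>
     if r < n then (if r + 1 = i \<or> r + 1 = j then 1 else 0)
     else if r - n + 1 = i then 1 / (var i - var j)
     else if r - n + 1 = j then 1 / (var j - var i)
     else 0)"

definition scattering_matrix :: "nat \<Rightarrow> (nat \<times> nat) set \<Rightarrow> ratfun mat" where
  "scattering_matrix n G =
     mat (2 * n) (card G) (\<lambda>(r, c). scat_entry n (sorted_list_of_set G ! c) r)"

definition scattering_rank :: "nat \<Rightarrow> (nat \<times> nat) set \<Rightarrow> nat" where
  "scattering_rank n G = vec_space.rank (2 * n) (scattering_matrix n G)"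

end

theory Submission
  imports Defs
begin

context
  fixes a b p q :: "'a::field"
  assumes d: "a \<noteq> b" "a \<noteq> p" "a \<noteq> q" "b \<noteq> p" "b \<noteq> q" "p \<noteq> q"
begin
definition "al = (q-b)*(p-a)/((a-b)*(p-q))"
definition "ga = (p-b)*(q-a)/((a-b)*(q-p))"
lemma L1: "al + ga = 1"
proof -
  have "a - b \<noteq> 0" "p - q \<noteq> 0" "q - p \<noteq> 0" using d by auto
  then show ?thesis unfolding al_def ga_def by (simp add: divide_simps) (simp add: algebra_simps)
qed
lemma L2: "al * (1/(p-a)) + (1-al) * (1/(p-b)) = 1/(p-q)"
proof -
  have "a - b \<noteq> 0" "p - q \<noteq> 0" "q - p \<noteq> 0" "p - a \<noteq> 0" "p - b \<noteq> 0" using d by auto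
  then show ?thesis unfolding al_def by (simp add: divide_simps) (simp add: algebra_simps)
qed
lemma L3: "ga * (1/(q-a)) + (1-ga) * (1/(q-b)) = 1/(q-p)"
proof -
  have "a - b \<noteq> 0" "p - q \<noteq> 0" "q - p \<noteq> 0" "q - a \<noteq> 0" "q - b \<noteq> 0" using d by auto
  then show ?thesis unfolding ga_def by (simp add: divide_simps) (simp add: algebra_simps)
qed
lemma L4: "al * (1/(a-p)) + ga * (1/(a-q)) + (-1) * (1/(a-b)) = 0"
proof -
  have "a - b \<noteq> 0" "p - q \<noteq> 0" "q - p \<noteq> 0" "a - p \<noteq> 0" "a - q \<noteq> 0" using d by auto
  then show ?thesis unfolding al_def ga_def by (simp add: divide_simps) (simp add: algebra_simps)
qed
lemma L5: "(1-al) * (1/(b-p)) + (1-ga) * (1/(b-q)) + (-1) * (1/(b-a)) = 0"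
proof -
  have "a - b \<noteq> 0" "b - a \<noteq> 0" "p - q \<noteq> 0" "q - p \<noteq> 0" "b - p \<noteq> 0" "b - q \<noteq> 0" using d by auto
  then show ?thesis unfolding al_def ga_def by (simp add: divide_simps) (simp add: algebra_simps)
qed
end
lemma solve2: fixes a b p c1 c2 :: "'a::field"
  assumes "a \<noteq> b" "p \<noteq> a" "p \<noteq> b" "c1 + c2 = 0" "c1 * (1/(p-a)) + c2 * (1/(p-b)) = 0"
  shows "c1 = 0"
proof -
  have c2: "c2 = - c1" using assms(4) by (simp add: eq_neg_iff_add_eq_0 add.commute)
  have "p - a \<noteq> 0" "p - b \<noteq> 0" "a - b \<noteq> 0" using assms by auto
  with assms(5) c2 have "c1 * (a - b) = 0" by (simp add: divide_simps)
  then show ?thesis using \<open>a - b \<noteq> 0\<close> by simp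
qed

lemma var_inj: "i \<noteq> j \<Longrightarrow> var i \<noteq> var j"
  unfolding var_def
  by (metis (no_types, lifting) eq_fract(1) lookup_single_eq
    lookup_single_not_eq mult.right_neutral zero_neq_one)

definition colv :: "nat \<Rightarrow> nat \<times> nat \<Rightarrow> ratfun vec" where
  "colv m e = vec (2*m) (scat_entry m e)"

definition E0 :: "nat \<Rightarrow> (nat \<times> nat) set" where
  "E0 m = (\<lambda>j. (1,j)) ` {2..m} \<union> (\<lambda>j. (2,j)) ` {3..m}"

lemma colv_index[simp]: "r < 2*m \<Longrightarrow> colv m e $ r = scat_entry m e r"
  by (simp add: colv_def)

lemma colv_dim[simp]: "dim_vec (colv m e) = 2*m"
  by (simp add: colv_def)

lemma colv_carrier[simp]: "colv m e \<in> carrier_vec (2*m)"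
  by (simp add: colv_def)

lemma cols_eq: assumes "finite G"
  shows "set (cols (scattering_matrix m G)) = colv m ` G"
proof -
  have "set (cols (scattering_matrix m G)) = (\<lambda>c. colv m (sorted_list_of_set G ! c)) ` {..<card G}"
  proof -
    have "set (cols (scattering_matrix m G)) = col (scattering_matrix m G) ` {..<card G}"
      by (auto simp: cols_def scattering_matrix_def)
    also have "\<dots> = (\<lambda>c. colv m (sorted_list_of_set G ! c)) ` {..<card G}"
      by (rule image_cong) (auto simp: scattering_matrix_def colv_def col_def)
    finally show ?thesis .
  qed
  also have "\<dots> = colv m ` ((!) (sorted_list_of_set G) ` {..<length (sorted_list_of_set G)})"
    by (simp add: image_image)
  also have "\<dots> = colv m ` G"
    by (metis assms image_set list.set_map map_nth set_sorted_list_of_set atLeast_upt set_upt)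
  finally show ?thesis .
qed

lemma E0_cases: "e \<in> E0 m \<Longrightarrow> e = (1,2) \<or> (\<exists>k. 3 \<le> k \<and> k \<le> m \<and> (e = (1,k) \<or> e = (2,k)))"
  unfolding E0_def by (auto simp: le_Suc_eq eval_nat_numeral)

lemma E0_sub: "E0 m \<subseteq> complete_graph m"
  by (auto simp: E0_def complete_graph_def)

lemma finite_K: "finite (complete_graph m)"
proof -
  have "complete_graph m \<subseteq> {1..m} \<times> {1..m}" by (auto simp: complete_graph_def)
  then show ?thesis by (rule finite_subset) auto
qed

lemma colv_inj: "inj_on (colv m) (complete_graph m)"
proof
  fix e f assume e: "e \<in> complete_graph m" and f: "f \<in> complete_graph m" and eq: "colv m e = colv m f"
  obtain i j where ij: "e = (i,j)" "1 \<le> i" "i < j" "j \<le> m" using e by (auto simp: complete_graph_def)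
  obtain i' j' where ij': "f = (i',j')" "1 \<le> i'" "i' < j'" "j' \<le> m" using f by (auto simp: complete_graph_def)
  have key: "\<And>k. 1 \<le> k \<Longrightarrow> k \<le> m \<Longrightarrow> (k = i \<or> k = j) = (k = i' \<or> k = j')"
  proof -
    fix k assume k: "1 \<le> k" "k \<le> m"
    have "colv m e $ (k-1) = colv m f $ (k-1)" using eq by simp
    then show "(k = i \<or> k = j) = (k = i' \<or> k = j')" using k ij ij'
      by (auto simp: scat_entry_def split: if_splits)
  qed
  show "e = f" using key[of i] key[of j] key[of i'] key[of j'] ij ij' by auto
qed

lemma card_E0: "m \<ge> 3 \<Longrightarrow> card (E0 m) = 2*m - 3"
proof -
  assume m: "m \<ge> 3"
  have "card (E0 m) = card ((\<lambda>j. (1::nat,j)) ` {2..m}) + card ((\<lambda>j. (2::nat,j)) ` {3..m})"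
    unfolding E0_def by (rule card_Un_disjoint) auto
  also have "\<dots> = card {2..m} + card {3..m}"
    by (subst card_image, simp add: inj_on_def)+ simp
  finally show ?thesis using m by simp
qed


theorem mainTheorem7:
  fixes n :: nat
  assumes "n \<ge> 3"
  shows "(\<forall>G. graph_on n G \<longrightarrow> scattering_rank n G \<le> 2 * n - 3)
         \<and> scattering_rank n (complete_graph n) = 2 * n - 3"
proof -
  interpret vs: vec_space "TYPE(ratfun)" "2*n" .
  let ?B = "colv n ` E0 n"
  let ?K = "complete_graph n"
  have Bc: "?B \<subseteq> carrier_vec (2*n)" by auto
  have finE: "finite (E0 n)" using finite_subset[OF E0_sub finite_K] .
  have finB: "finite ?B" using finE by simp
  have injE: "inj_on (colv n) (E0 n)" using inj_on_subset[OF colv_inj E0_sub] .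
  have cardB: "card ?B = 2*n-3" using card_image[OF injE] card_E0[OF assms] by simp
  have inE: "(1,k) \<in> E0 n" "(2,k) \<in> E0 n" if "3 \<le> k" "k \<le> n" for k
    using that by (auto simp: E0_def)
  have in12: "(1,2) \<in> E0 n" using assms by (auto simp: E0_def)
  have span: "colv n e \<in> vs.span ?B" if e: "e \<in> ?K" for e
  proof -
    obtain i j where ij: "e = (i,j)" "1 \<le> i" "i < j" "j \<le> n" using e by (auto simp: complete_graph_def)
    show ?thesis
    proof (cases "i \<le> 2")
      case True
      have "i = 1 \<or> i = 2" using True ij by auto
      then have "e \<in> E0 n" using ij by (auto simp: E0_def image_iff)
      then show ?thesis using vs.in_own_span[OF Bc] by blast
    next
      case False
      define a where "a = var 1"
      define b where "b = var 2"
      define p where "p = var i"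
      define q where "q = var j"
      have d: "a \<noteq> b" "a \<noteq> p" "a \<noteq> q" "b \<noteq> p" "b \<noteq> q" "p \<noteq> q"
        unfolding a_def b_def p_def q_def using False ij var_inj[of 1 2] var_inj[of 1 i] var_inj[of 1 j] var_inj[of 2 i] var_inj[of 2 j] var_inj[of i j] by auto
      note LL = L1[OF d] L2[OF d] L3[OF d] L4[OF d] L5[OF d]
      let ?al = "al a b p q" let ?ga = "ga a b p q"
      let ?R = "?al \<cdot>\<^sub>v colv n (1,i) + (1 - ?al) \<cdot>\<^sub>v colv n (2,i) + ?ga \<cdot>\<^sub>v colv n (1,j)
          + (1 - ?ga) \<cdot>\<^sub>v colv n (2,j) + (-1) \<cdot>\<^sub>v colv n (1,2)"
      have Rr: "?R $ r = ?al * scat_entry n (1,i) r + (1 - ?al) * scat_entry n (2,i) r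
          + ?ga * scat_entry n (1,j) r + (1 - ?ga) * scat_entry n (2,j) r + (-1) * scat_entry n (1,2) r"
        if "r < 2*n" for r using that by simp
      have top: "colv n e $ (k-1) = ?R $ (k-1)" if k: "1 \<le> k" "k \<le> n" for k
      proof -
        have r: "k - 1 < 2*n" using k by simp
        note Rr[OF r] colv_index[OF r]
        consider "k = 1" | "k = 2" | "k = i" | "k = j" | "k \<noteq> 1" "k \<noteq> 2" "k \<noteq> i" "k \<noteq> j" by blast
        then show ?thesis unfolding Rr[OF r] colv_index[OF r] using k ij False LL
          by cases (auto simp: scat_entry_def algebra_simps)
      qed
      have bot: "colv n e $ (n+k-1) = ?R $ (n+k-1)" if k: "1 \<le> k" "k \<le> n" for k
      proof -
        have r: "n+k - 1 < 2*n" using k by simp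
        note Rr[OF r] colv_index[OF r]
        consider "k = 1" | "k = 2" | "k = i" | "k = j" | "k \<noteq> 1" "k \<noteq> 2" "k \<noteq> i" "k \<noteq> j" by blast
        then show ?thesis unfolding Rr[OF r] colv_index[OF r] using k ij False LL
          by cases (auto simp: scat_entry_def a_def b_def p_def q_def algebra_simps)
      qed
      have eq: "colv n e = ?R"
      proof (rule eq_vecI)
        show "dim_vec (colv n e) = dim_vec ?R" by simp
        fix r assume "r < dim_vec ?R"
        then have r: "r < 2*n" by simp
        show "colv n e $ r = ?R $ r"
        proof (cases "r < n")
          case True
          then show ?thesis using top[of "r+1"] by simp
        next
          case False
          then show ?thesis using bot[of "r-n+1"] r by simp
        qed
      qed
      have mem: "colv n (1,i) \<in> vs.span ?B" "colv n (2,i) \<in> vs.span ?B" "colv n (1,j) \<in> vs.span ?B"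
          "colv n (2,j) \<in> vs.span ?B" "colv n (1,2) \<in> vs.span ?B"
        using vs.in_own_span[OF Bc] inE[of i] inE[of j] in12 False ij by auto
      show ?thesis unfolding eq
        by (intro vs.span_add1[OF Bc] vs.prod_in_span[OF _ Bc] mem colv_carrier disjI2)
    qed
  qed
  have indep: "vs.lin_indpt ?B"
  proof (rule vs.finite_lin_indpt2[OF finB Bc])
    fix a assume lc: "vs.lincomb a ?B = 0\<^sub>v (2*n)"
    define c where "c e = a (colv n e)" for e
    have rowsum: "(\<Sum>e\<in>E0 n. c e * scat_entry n e r) = 0" if r: "r < 2*n" for r
    proof -
      have "vs.lincomb a ?B $ r = (\<Sum>x\<in>?B. a x * x $ r)" using vs.lincomb_index[OF r Bc] .
      also have "\<dots> = (\<Sum>e\<in>E0 n. a (colv n e) * colv n e $ r)"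
        using sum.reindex[OF injE, of "\<lambda>x. a x * x $ r"] by simp
      also have "\<dots> = (\<Sum>e\<in>E0 n. c e * scat_entry n e r)" using r by (simp add: c_def)
      finally show ?thesis using lc r by simp
    qed
    have ck: "c (1,k) = 0 \<and> c (2,k) = 0" if k: "3 \<le> k" "k \<le> n" for k
    proof -
      have "k - 1 < 2*n" "n+k - 1 < 2*n" using k by auto
      have "(\<Sum>e\<in>E0 n. c e * scat_entry n e (k-1)) = 
            (\<Sum>e\<in>E0 n. (if e = (1,k) then c (1,k) else 0) + (if e = (2,k) then c (2,k) else 0))"
        by (rule sum.cong) (use k in \<open>auto simp: E0_def scat_entry_def split: if_splits\<close>)
      then have s1: "c (1,k) + c (2,k) = 0" using rowsum[of "k-1"] k inE[OF k] \<open>k - 1 < 2*n\<close>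
        using finE by (simp add: sum.distrib sum.delta)
      have "(\<Sum>e\<in>E0 n. c e * scat_entry n e (n+k-1)) = 
            (\<Sum>e\<in>E0 n. (if e = (1,k) then c (1,k) * (1 / (var k - var 1)) else 0)
               + (if e = (2,k) then c (2,k) * (1 / (var k - var 2)) else 0))"
        by (rule sum.cong) (use k in \<open>auto simp: E0_def scat_entry_def split: if_splits\<close>)
      then have s2: "c (1,k) * (1 / (var k - var 1)) + c (2,k) * (1 / (var k - var 2)) = 0"
        using rowsum[of "n+k-1"] k inE[OF k] \<open>n+k - 1 < 2*n\<close> using finE by (simp add: sum.distrib sum.delta)
      have "var 1 \<noteq> var 2" "var k \<noteq> var 1" "var k \<noteq> var 2" using var_inj k by auto
      from solve2[OF this s1 s2] s1 show ?thesis by simp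
    qed
    have "(\<Sum>e\<in>E0 n. c e * scat_entry n e 0) = (\<Sum>e\<in>E0 n. (if e = (1,2) then c (1,2) else 0))"
    proof (rule sum.cong)
      fix e assume "e \<in> E0 n"
      from E0_cases[OF this] show "c e * scat_entry n e 0 = (if e = (1,2) then c (1,2) else 0)"
      proof
        assume "e = (1,2)" then show ?thesis using assms by (simp add: scat_entry_def)
      next
        assume "\<exists>k. 3 \<le> k \<and> k \<le> n \<and> (e = (1,k) \<or> e = (2,k))"
        then obtain k where k: "3 \<le> k" "k \<le> n" "e = (1,k) \<or> e = (2,k)" by blast
        from ck[OF k(1,2)] k show ?thesis by (auto simp: scat_entry_def)
      qed
    qed simp
    then have c12: "c (1,2) = 0" using rowsum[of 0] assms in12 finE by (simp add: sum.delta)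
    show "\<forall>v\<in>?B. a v = 0"
    proof
      fix v assume "v \<in> ?B"
      then obtain e where e: "e \<in> E0 n" "v = colv n e" by auto
      from E0_cases[OF e(1)] have "c e = 0"
      proof
        assume "e = (1,2)" then show ?thesis using c12 by simp
      next
        assume "\<exists>k. 3 \<le> k \<and> k \<le> n \<and> (e = (1,k) \<or> e = (2,k))"
        then obtain k where k: "3 \<le> k" "k \<le> n" "e = (1,k) \<or> e = (2,k)" by blast
        from ck[OF k(1,2)] k show ?thesis by auto
      qed
      then show "a v = 0" using e by (simp add: c_def)
    qed
  qed
  have upper: "scattering_rank n G \<le> 2*n-3" if G: "graph_on n G" for G
  proof -
    let ?A = "scattering_matrix n G"
    have GK: "G \<subseteq> ?K" using G by (simp add: graph_on_def complete_graph_def)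
    have finG: "finite G" using finite_subset[OF GK finite_K] .
    have Ac: "?A \<in> carrier_mat (2*n) (card G)" by (simp add: scattering_matrix_def)
    have colsB: "set (cols ?A) \<subseteq> vs.span ?B" using cols_eq[OF finG] span GK by auto
    obtain S where S: "maximal S (\<lambda>T. T \<subseteq> set (cols ?A) \<and> vs.lin_indpt T)"
      using maximal_exists[of "(\<lambda>T. T \<subseteq> set (cols ?A) \<and> vs.lin_indpt T)" "card (set (cols ?A))" "{}"]
      by (meson List.finite_set card_mono empty_iff empty_subsetI vs.finite_lin_indpt2 rev_finite_subset)
    have rk: "vs.rank ?A = card S" using vs.rank_card_indpt[OF Ac S] .
    have SA: "S \<subseteq> set (cols ?A)" "vs.lin_indpt S" using S by (auto simp: maximal_def)
    have finS: "finite S" using SA(1) finite_subset by blast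
    from vs.replacement[OF finS finB Bc SA(2)] SA(1) colsB
    have "card S \<le> card ?B" by fastforce
    then show ?thesis using rk cardB by (simp add: scattering_rank_def)
  qed
  have lower: "scattering_rank n ?K \<ge> 2*n-3"
  proof -
    let ?A = "scattering_matrix n ?K"
    have Ac: "?A \<in> carrier_mat (2*n) (card ?K)" by (simp add: scattering_matrix_def)
    have "?B \<subseteq> set (cols ?A)" unfolding cols_eq[OF finite_K] using E0_sub[of n] by (rule image_mono)
    from vs.rank_ge_card_indpt[OF Ac this indep] cardB show ?thesis by (simp add: scattering_rank_def)
  qed
  show ?thesis using upper lower graph_on_def complete_graph_def
    by (metis order_antisym graph_on_def complete_graph_def order_refl)
qed

end
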